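(* Let $n\ge 1$ and let $T_n$ be the $n\times n$ tridiagonal matrix with diagonal entries $(T_n)_{ii}=1$ for $1\le i\le n$, superdiagonal entries $(T_n)_{i,i+1}=i$ and subdiagonal entries $(T_n)_{i+1,i}=n-i$ for $1\le i\le n-1$, and all other entries $0$. Then $$\det(T_n)=\begin{cases}0 & \text{if } n \text{ is even},\\[4pt] \dfrac{(-1)^{\frac{n-1}{2}}\, n!}{2^{n-1}}\dbinom{n-1}{\frac{n-1}{2}} & \text{if } n \text{ is odd}.\end{cases}$$ *)

theory Defs
  imports "Jordan_Normal_Form.Determinant"
begin

text \<open>The n x n tridiagonal matrix T_n, 0-indexed: paper entry (i+1, j+1) is entry (i, j) here.
  Diagonal 1; superdiagonal (paper (i,i+1) = i) becomes entry (r, r+1) = r+1;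
  subdiagonal (paper (i+1,i) = n-i) becomes entry (r, r-1) = n - r.\<close>
definition T_mat :: "nat \<Rightarrow> real mat" where
  "T_mat n = mat n n (\<lambda>(r, c).
      if r = c then 1
      else if c = r + 1 then real (r + 1)
      else if r = c + 1 then real n - real r
      else 0)"

end

theory Submission imports Defs begin

lemma absorb_real: "real (Suc k) * real (c choose Suc k) = (real c - real k) * real (c choose k)"
proof (cases "k \<le> c")
  case True
  have "(c - k) * (c choose k) = Suc k * (c choose Suc k)"
    using binomial_absorb_comp binomial_absorption by metis
  then have "real ((c - k) * (c choose k)) = real (Suc k * (c choose Suc k))" by simp
  then show ?thesis using True by (simp add: of_nat_diff algebra_simps)
next
  case False then show ?thesis by (simp add: binomial_eq_0)
qed

lemma pascal_real: "real (Suc c choose Suc s) = real (c choose s) + real (c choose Suc s)"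
  by simp

lemma entry_id:
  fixes n r c :: nat
  shows "real (c choose r) + real (Suc r) * real (c choose Suc r)
     + (if r = 0 then 0 else (real n - real r) * real (c choose (r - 1)))
   = (2 * real c + 2 - real n) * real (c choose r) + (real n - 1 - real c) * real (Suc c choose r)"
proof (cases r)
  case 0 then show ?thesis by (simp add: absorb_real algebra_simps)
next
  case (Suc s)
  have a: "real (Suc s) * real (c choose Suc s) = (real c - real s) * real (c choose s)"
    by (rule absorb_real)
  have b: "real (Suc (Suc s)) * real (c choose Suc (Suc s)) = (real c - real (Suc s)) * real (c choose Suc s)"
    by (rule absorb_real)
  show ?thesis unfolding Suc using a b
    by (simp add: algebra_simps)
qed

definition Bm :: "nat \<Rightarrow> real mat" where
  "Bm n = mat n n (\<lambda>(r, c). real (c choose r))"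
definition Mm :: "nat \<Rightarrow> real mat" where
  "Mm n = mat n n (\<lambda>(r, c). if r = c then 2 * real c + 2 - real n
      else if r = c + 1 then real n - 1 - real c else 0)"

lemma TB_eq: "T_mat n * Bm n = Bm n * Mm n"
proof (rule eq_matI)
  fix r c assume r: "r < dim_row (Bm n * Mm n)" and c: "c < dim_col (Bm n * Mm n)"
  then have rn: "r < n" and cn: "c < n" by (auto simp: Bm_def Mm_def)
  have L: "(T_mat n * Bm n) $$ (r, c) = (\<Sum>k\<in>{0..<n}.
      (if k = r then real (c choose r) else 0)
      + (if k = Suc r then real (Suc r) * real (c choose Suc r) else 0)
      + (if r \<noteq> 0 \<and> k = r - 1 then (real n - real r) * real (c choose (r - 1)) else 0))"
    using rn cn unfolding T_mat_def Bm_def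
    by (auto simp: scalar_prod_def intro!: sum.cong)
  also have "\<dots> = real (c choose r) + real (Suc r) * real (c choose Suc r)
     + (if r = 0 then 0 else (real n - real r) * real (c choose (r - 1)))"
  proof -
    have z: "Suc r \<ge> n \<Longrightarrow> real (c choose Suc r) = 0" using cn by (simp add: binomial_eq_0)
    show ?thesis using rn z cn by (cases r) (auto simp: sum.distrib)
  qed
  also have "\<dots> = (2 * real c + 2 - real n) * real (c choose r) + (real n - 1 - real c) * real (Suc c choose r)"
    by (rule entry_id)
  also have "\<dots> = (\<Sum>k\<in>{0..<n}. (if k = c then (2 * real c + 2 - real n) * real (c choose r) else 0)
      + (if k = Suc c then (real n - 1 - real c) * real (Suc c choose r) else 0))"
  proof -
    have z: "Suc c \<ge> n \<Longrightarrow> real n - 1 - real c = 0" using cn by simp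
    show ?thesis using cn z by (simp add: sum.distrib)
  qed
  also have "\<dots> = (Bm n * Mm n) $$ (r, c)"
    using rn cn unfolding Mm_def Bm_def
    by (auto simp: scalar_prod_def intro!: sum.cong)
  finally show "(T_mat n * Bm n) $$ (r, c) = (Bm n * Mm n) $$ (r, c)" .
qed (auto simp: T_mat_def Bm_def Mm_def)

lemma alg: fixes s t f y q :: real assumes "y > 0" "q > 0" "t \<ge> 0"
  shows "(-1 - 2 * t) * ((s * ((2 * t + 1) * f) * f / (q * y * y)) * (2 * t + 3)) =
   (- s) * ((2 * t + 3) * (2 * t + 2) * ((2 * t + 1) * f)) * ((2 * t + 2) * (2 * t + 1) * f) / ((4 * q) * ((t + 1) * y) * ((t + 1) * y))"
proof -
  have ne: "q * y * y \<noteq> 0" "(4 * q) * ((t + 1) * y) * ((t + 1) * y) \<noteq> 0" using assms by auto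
  have "(-1 - 2 * t) * ((s * ((2 * t + 1) * f) * f / (q * y * y)) * (2 * t + 3))
     = ((-1 - 2 * t) * (s * ((2 * t + 1) * f) * f) * (2 * t + 3)) / (q * y * y)" by simp
  also have "\<dots> = (- s) * ((2 * t + 3) * (2 * t + 2) * ((2 * t + 1) * f)) * ((2 * t + 2) * (2 * t + 1) * f) / ((4 * q) * ((t + 1) * y) * ((t + 1) * y))"
    by (subst frac_eq_eq[OF ne]) (simp add: algebra_simps)
  finally show ?thesis .
qed

definition gp :: "real \<Rightarrow> nat \<Rightarrow> real" where
  "gp a k = (\<Prod>c<k. a + 2 * real c)"

lemma gp1: "gp a (Suc k) = gp a k * (a + 2 * real k)"
  by (simp add: gp_def)

lemma gp2: "gp a (Suc k) = a * gp (a + 2) k"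
  unfolding gp_def prod.lessThan_Suc_shift by (simp add: algebra_simps)

lemma odd_prod: "gp (1 - 2 * real m) (2 * m + 1) =
   (-1) ^ m * fact (2 * m + 1) * fact (2 * m) / (4 ^ m * fact m * fact m)"
proof (induction m)
  case 0 then show ?case by (simp add: gp_def)
next
  case (Suc m)
  have "gp (1 - 2 * real (Suc m)) (2 * Suc m + 1) = (-1 - 2 * real m) * gp (1 - 2 * real m) (2 * m + 2)"
    using gp2[of "1 - 2 * real (Suc m)" "2 * m + 2"] by (simp add: algebra_simps)
  also have "\<dots> = (-1 - 2 * real m) * (gp (1 - 2 * real m) (2 * m + 1) * (2 * real m + 3))"
    using gp1[of "1 - 2 * real m" "2 * m + 1"] by (simp add: algebra_simps)
  also have "\<dots> = (-1 - 2 * real m) * (((-1) ^ m * fact (2 * m + 1) * fact (2 * m) / (4 ^ m * fact m * fact m)) * (2 * real m + 3))"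
    using Suc.IH by simp
  also have "\<dots> = (-1) ^ Suc m * fact (2 * Suc m + 1) * fact (2 * Suc m) / (4 ^ Suc m * fact (Suc m) * fact (Suc m))"
  proof -
    have f1: "fact (2 * Suc m + 1) = (2 * real m + 3) * (2 * real m + 2) * (fact (2 * m + 1) :: real)"
      by (simp add: fact_Suc algebra_simps)
    have f2: "fact (2 * Suc m) = (2 * real m + 2) * (2 * real m + 1) * (fact (2 * m) :: real)"
      by (simp add: fact_Suc algebra_simps)
    have f3: "fact (2 * m + 1) = (2 * real m + 1) * (fact (2 * m) :: real)"
      by (simp add: fact_Suc algebra_simps)
    have f4: "fact (Suc m) = (real m + 1) * (fact m :: real)" by (simp add: algebra_simps)
    have p: "(fact m :: real) > 0" "(4::real) ^ m > 0" by auto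
    have e1: "(-1::real) ^ Suc m = - ((-1) ^ m)" and e2: "(4::real) ^ Suc m = 4 * 4 ^ m" by simp_all
    show ?thesis unfolding f1 f2 f3 f4 e1 e2
      by (rule alg) (use p in auto)
  qed
  finally show ?case .
qed

lemma prod_formula:
  fixes n :: nat
  assumes "n \<ge> 1"
  shows "(\<Prod>c\<in>{0..<n}. 2 * real c + 2 - real n) =
    (if even n then 0
     else (-1) ^ ((n - 1) div 2) * fact n / 2 ^ (n - 1) * real ((n - 1) choose ((n - 1) div 2)))"
proof (cases "even n")
  case True
  then obtain m where m: "n = 2 * m" by blast
  with assms have "m - 1 \<in> {0..<n}" "2 * real (m - 1) + 2 - real n = 0" by auto
  then show ?thesis using True by (metis prod_zero_iff finite_atLeastLessThan)
next
  case False
  then obtain m where m: "n = 2 * m + 1" using oddE by blast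
  have "(\<Prod>c\<in>{0..<n}. 2 * real c + 2 - real n) = gp (1 - 2 * real m) (2 * m + 1)"
    unfolding gp_def m by (intro prod.cong) (auto simp: algebra_simps)
  also have "\<dots> = (-1) ^ m * fact (2 * m + 1) / 2 ^ (2 * m) * real ((2 * m) choose m)"
  proof -
    have cc: "real ((2*m) choose m) = fact (2*m) / (fact m * fact m)"
      using binomial_fact[of m "2*m"] by simp
    have d: "(2::real) ^ (2*m) = 4 ^ m" by (simp add: power_mult)
    show ?thesis unfolding odd_prod cc d by simp
  qed
  finally show ?thesis using m False by simp
qed

lemma detB: "det (Bm n) = 1"
proof -
  have "det (Bm n) = prod_list (diag_mat (Bm n))"
    by (rule det_upper_triangular[of _ n]) (auto simp: Bm_def upper_triangular_def binomial_eq_0)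
  also have "\<dots> = 1" by (simp add: prod_list_diag_prod Bm_def)
  finally show ?thesis .
qed

lemma detM: "det (Mm n) = (\<Prod>c\<in>{0..<n}. 2 * real c + 2 - real n)"
proof -
  have "det (Mm n) = prod_list (diag_mat (Mm n))"
    by (rule det_lower_triangular[of n]) (auto simp: Mm_def)
  also have "\<dots> = (\<Prod>c\<in>{0..<n}. 2 * real c + 2 - real n)" by (simp add: prod_list_diag_prod Mm_def)
  finally show ?thesis .
qed

theorem mainTheorem4:
  fixes n :: nat
  assumes "n \<ge> 1"
  shows "det (T_mat n) =
    (if even n then 0
     else (-1) ^ ((n - 1) div 2) * fact n / 2 ^ (n - 1) * real ((n - 1) choose ((n - 1) div 2)))"
proof -
  have c: "T_mat n \<in> carrier_mat n n" "Bm n \<in> carrier_mat n n" "Mm n \<in> carrier_mat n n"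
    by (auto simp: T_mat_def Bm_def Mm_def)
  have "det (T_mat n) = det (T_mat n * Bm n)" using det_mult[OF c(1,2)] detB by simp
  also have "\<dots> = det (Bm n * Mm n)" using TB_eq by simp
  also have "\<dots> = det (Mm n)" using det_mult[OF c(2,3)] detB by simp
  finally have "det (T_mat n) = det (Mm n)" .
  then show ?thesis using detM prod_formula[OF assms] by simp
qed

end
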